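(* For every $i\in\mathcal U$ and every $a\in L$: $\exists u\,T(i,a,u)$ holds if and only if the sequent $B\to\exists u\,T(i,a,u)$ is provable.
   Context: The theory $\mathbf B$: first-order theory with binary infix function symbol "$.$", predicates $T(i,a,u)$, $U(x,s,z,q,j,i,u)$, and single axiom $B$, the conjunction of the universal closures of: (1) $T(i,a,u)\supset U(\emptyset,\emptyset,a.\emptyset,1,i,i,u)$; (2) $U(\emptyset,\emptyset,a.\emptyset,1,i,i,u)\supset T(i,a,u)$; (3) $U(x,s,z,0,i,i,x)$; (4) $U(x,v,r.z,p,i,i,u)\supset U(x.v,s,z,q,\,q.s.p.r.0.j,\,i,u)$; (5) $U(x.r,v,z,p,i,i,u)\supset U(x,s,v.z,q,\,q.s.p.r.1.j,\,i,u)$; (6) $U(x,s,z,q,j,i,u)\supset U(x,s,z,q,\,q'.s'.p.r.d.j,\,i,u)$. $L$ is the set of right-tape lists (built from $\emptyset$ by $s.z$ with $s$ a tape symbol), $M\subset L$ the set of Turing machine codes (lists of quintuples $q.s.p.r.d$ with states $p,q$, symbols $r,s$, move $d\in\{0,1\}$); in the intended interpretation $T(i,a,u)$ means machine $i$ on input $a$ halts with output $u$. $\mathcal U$ is the set of deterministic Turing machine codes (no two quintuples with the same $q.s$ and different $p.r.d$) that on every input $F.\emptyset$, $F$ a propositional formula, halt with output $\emptyset.0$ if $F$ is satisfiable and $\emptyset.1$ if $F$ is unsatisfiable. *)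

theory Defs
  imports Main
begin

section \<open>First-order syntax of the theory B (with equality), de Bruijn variables\<close>

text \<open>Function symbols: constants empty, 0, 1 and the binary infix dot.
  Predicate symbols: T (ternary) and U (7-ary).\<close>

datatype sym = SEmp | SZero | SOne | SDot
datatype prd = PT | PU

datatype tm = Var nat | App sym "tm list"

datatype fm = FF | Pred prd "tm list" | Eq tm tm | Imp fm fm | And fm fm | Or fm fm
  | All fm | Ex fm

primrec liftt :: "nat \<Rightarrow> tm \<Rightarrow> tm" where
  "liftt k (Var i) = (if i < k then Var i else Var (Suc i))"
| "liftt k (App f ts) = App f (map (liftt k) ts)"

primrec substt :: "tm \<Rightarrow> tm \<Rightarrow> nat \<Rightarrow> tm" where
  "substt (Var i) s k = (if k < i then Var (i - 1) else if i = k then s else Var i)"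
| "substt (App f ts) s k = App f (map (\<lambda>t. substt t s k) ts)"

primrec liftf :: "nat \<Rightarrow> fm \<Rightarrow> fm" where
  "liftf k FF = FF"
| "liftf k (Pred p ts) = Pred p (map (liftt k) ts)"
| "liftf k (Eq t u) = Eq (liftt k t) (liftt k u)"
| "liftf k (Imp p q) = Imp (liftf k p) (liftf k q)"
| "liftf k (And p q) = And (liftf k p) (liftf k q)"
| "liftf k (Or p q) = Or (liftf k p) (liftf k q)"
| "liftf k (All p) = All (liftf (Suc k) p)"
| "liftf k (Ex p) = Ex (liftf (Suc k) p)"

text \<open>substf p s k: substitute s for variable k, decrementing the variables above k.\<close>
primrec substf :: "fm \<Rightarrow> tm \<Rightarrow> nat \<Rightarrow> fm" where
  "substf FF s k = FF"
| "substf (Pred p ts) s k = Pred p (map (\<lambda>t. substt t s k) ts)"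
| "substf (Eq t u) s k = Eq (substt t s k) (substt u s k)"
| "substf (Imp p q) s k = Imp (substf p s k) (substf q s k)"
| "substf (And p q) s k = And (substf p s k) (substf q s k)"
| "substf (Or p q) s k = Or (substf p s k) (substf q s k)"
| "substf (All p) s k = All (substf p (liftt 0 s) (Suc k))"
| "substf (Ex p) s k = Ex (substf p (liftt 0 s) (Suc k))"

text \<open>Classical natural deduction for first-order logic with equality.
  \<open>G \<turnstile> p\<close>: the sequent G \<rightarrow> p is provable.\<close>

inductive deriv :: "fm list \<Rightarrow> fm \<Rightarrow> bool" (infix "\<turnstile>" 30) where
  Assum: "p \<in> set G \<Longrightarrow> G \<turnstile> p"
| FFE: "G \<turnstile> FF \<Longrightarrow> G \<turnstile> p"
| Class: "Imp p FF # G \<turnstile> FF \<Longrightarrow> G \<turnstile> p"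
| ImpI: "p # G \<turnstile> q \<Longrightarrow> G \<turnstile> Imp p q"
| ImpE: "G \<turnstile> Imp p q \<Longrightarrow> G \<turnstile> p \<Longrightarrow> G \<turnstile> q"
| AndI: "G \<turnstile> p \<Longrightarrow> G \<turnstile> q \<Longrightarrow> G \<turnstile> And p q"
| AndE1: "G \<turnstile> And p q \<Longrightarrow> G \<turnstile> p"
| AndE2: "G \<turnstile> And p q \<Longrightarrow> G \<turnstile> q"
| OrI1: "G \<turnstile> p \<Longrightarrow> G \<turnstile> Or p q"
| OrI2: "G \<turnstile> q \<Longrightarrow> G \<turnstile> Or p q"
| OrE: "G \<turnstile> Or p q \<Longrightarrow> p # G \<turnstile> r \<Longrightarrow> q # G \<turnstile> r \<Longrightarrow> G \<turnstile> r"
| AllI: "map (liftf 0) G \<turnstile> p \<Longrightarrow> G \<turnstile> All p"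
| AllE: "G \<turnstile> All p \<Longrightarrow> G \<turnstile> substf p t 0"
| ExI: "G \<turnstile> substf p t 0 \<Longrightarrow> G \<turnstile> Ex p"
| ExE: "G \<turnstile> Ex p \<Longrightarrow> p # map (liftf 0) G \<turnstile> liftf 0 q \<Longrightarrow> G \<turnstile> q"
| EqR: "G \<turnstile> Eq t t"
| EqS: "G \<turnstile> Eq s t \<Longrightarrow> G \<turnstile> substf p s 0 \<Longrightarrow> G \<turnstile> substf p t 0"

abbreviation tE :: tm where "tE \<equiv> App SEmp []"
abbreviation t0 :: tm where "t0 \<equiv> App SZero []"
abbreviation t1 :: tm where "t1 \<equiv> App SOne []"
definition dot :: "tm \<Rightarrow> tm \<Rightarrow> tm" (infixr "\<cdot>" 70) where "a \<cdot> b = App SDot [a, b]"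

definition fT :: "tm \<Rightarrow> tm \<Rightarrow> tm \<Rightarrow> fm" where "fT i a u = Pred PT [i, a, u]"
definition fU :: "tm \<Rightarrow> tm \<Rightarrow> tm \<Rightarrow> tm \<Rightarrow> tm \<Rightarrow> tm \<Rightarrow> tm \<Rightarrow> fm" where
  "fU x s z q j i u = Pred PU [x, s, z, q, j, i, u]"

fun allc :: "nat \<Rightarrow> fm \<Rightarrow> fm" where
  "allc 0 p = p"
| "allc (Suc n) p = All (allc n p)"

definition ax1 :: fm where  \<comment> \<open>i = 0, a = 1, u = 2\<close>
  "ax1 = allc 3 (Imp (fT (Var 0) (Var 1) (Var 2))
                      (fU tE tE (Var 1 \<cdot> tE) t1 (Var 0) (Var 0) (Var 2)))"
definition ax2 :: fm where
  "ax2 = allc 3 (Imp (fU tE tE (Var 1 \<cdot> tE) t1 (Var 0) (Var 0) (Var 2))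
                      (fT (Var 0) (Var 1) (Var 2)))"
definition ax3 :: fm where  \<comment> \<open>x = 0, s = 1, z = 2, i = 3\<close>
  "ax3 = allc 4 (fU (Var 0) (Var 1) (Var 2) t0 (Var 3) (Var 3) (Var 0))"
definition ax4 :: fm where
  \<comment> \<open>x = 0, v = 1, r = 2, z = 3, p = 4, i = 5, u = 6, s = 7, q = 8, j = 9\<close>
  "ax4 = allc 10 (Imp (fU (Var 0) (Var 1) (Var 2 \<cdot> Var 3) (Var 4) (Var 5) (Var 5) (Var 6))
     (fU (Var 0 \<cdot> Var 1) (Var 7) (Var 3) (Var 8)
         (Var 8 \<cdot> Var 7 \<cdot> Var 4 \<cdot> Var 2 \<cdot> t0 \<cdot> Var 9) (Var 5) (Var 6)))"
definition ax5 :: fm where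
  \<comment> \<open>x = 0, r = 1, v = 2, z = 3, p = 4, i = 5, u = 6, s = 7, q = 8, j = 9\<close>
  "ax5 = allc 10 (Imp (fU (Var 0 \<cdot> Var 1) (Var 2) (Var 3) (Var 4) (Var 5) (Var 5) (Var 6))
     (fU (Var 0) (Var 7) (Var 2 \<cdot> Var 3) (Var 8)
         (Var 8 \<cdot> Var 7 \<cdot> Var 4 \<cdot> Var 1 \<cdot> t1 \<cdot> Var 9) (Var 5) (Var 6)))"
definition ax6 :: fm where
  \<comment> \<open>x = 0, s = 1, z = 2, q = 3, j = 4, i = 5, u = 6, q' = 7, s' = 8, p = 9, r = 10, d = 11\<close>
  "ax6 = allc 12 (Imp (fU (Var 0) (Var 1) (Var 2) (Var 3) (Var 4) (Var 5) (Var 6))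
     (fU (Var 0) (Var 1) (Var 2) (Var 3)
         (Var 7 \<cdot> Var 8 \<cdot> Var 9 \<cdot> Var 10 \<cdot> Var 11 \<cdot> Var 4) (Var 5) (Var 6)))"

definition axB :: fm where
  "axB = And ax1 (And ax2 (And ax3 (And ax4 (And ax5 ax6))))"

section \<open>Intended interpretation: closed terms and Turing machines\<close>

datatype gt = GE | GZ | GO | GDot gt gt

primrec tm_of :: "gt \<Rightarrow> tm" where
  "tm_of GE = tE" | "tm_of GZ = t0" | "tm_of GO = t1"
| "tm_of (GDot a b) = tm_of a \<cdot> tm_of b"

text \<open>Right-tape lists L and machine codes M (lists of quintuples q.s.p.r.d, d in {0,1}).\<close>
inductive_set L :: "gt set" where
  "GE \<in> L" | "z \<in> L \<Longrightarrow> GDot s z \<in> L"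

inductive_set M :: "gt set" where
  "GE \<in> M"
| "j \<in> M \<Longrightarrow> d \<in> {GZ, GO} \<Longrightarrow> GDot q (GDot s (GDot p (GDot r (GDot d j)))) \<in> M"

fun quints :: "gt \<Rightarrow> (gt \<times> gt \<times> gt \<times> gt \<times> gt) list" where
  "quints (GDot q (GDot s (GDot p (GDot r (GDot d j))))) = (q, s, p, r, d) # quints j"
| "quints _ = []"

text \<open>Configurations (left tape x, scanned symbol s, right tape z, state q).\<close>
inductive step :: "gt \<Rightarrow> gt \<times> gt \<times> gt \<times> gt \<Rightarrow> gt \<times> gt \<times> gt \<times> gt \<Rightarrow> bool" for i where
  left: "(q, s, p, r, GZ) \<in> set (quints i) \<Longrightarrow> step i (GDot x v, s, z, q) (x, v, GDot r z, p)"
| right: "(q, s, p, r, GO) \<in> set (quints i) \<Longrightarrow> step i (x, s, GDot v z, q) (GDot x r, v, z, p)"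

text \<open>Machine i on input a halts (reaches state 0) with output u (the left tape).\<close>
definition halts :: "gt \<Rightarrow> gt \<Rightarrow> gt \<Rightarrow> bool" where
  "halts i a u \<longleftrightarrow> (\<exists>s z. (step i)\<^sup>*\<^sup>* (GE, GE, GDot a GE, GO) (u, s, z, GZ))"

definition deterministic :: "gt \<Rightarrow> bool" where
  "deterministic i \<longleftrightarrow> (\<forall>q s p r d p' r' d'. (q, s, p, r, d) \<in> set (quints i) \<longrightarrow>
      (q, s, p', r', d') \<in> set (quints i) \<longrightarrow> (p, r, d) = (p', r', d'))"

datatype pform = PVar nat | PNeg pform | PConj pform pform | PDisj pform pform

primrec peval :: "(nat \<Rightarrow> bool) \<Rightarrow> pform \<Rightarrow> bool" where
  "peval v (PVar n) = v n" | "peval v (PNeg F) = (\<not> peval v F)"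
| "peval v (PConj F G) = (peval v F \<and> peval v G)"
| "peval v (PDisj F G) = (peval v F \<or> peval v G)"

definition psat :: "pform \<Rightarrow> bool" where "psat F \<longleftrightarrow> (\<exists>v. peval v F)"

definition UU :: "(pform \<Rightarrow> gt) \<Rightarrow> gt set" where
  "UU enc = {i \<in> M. deterministic i \<and>
     (\<forall>F. (psat F \<longrightarrow> halts i (GDot (enc F) GE) (GDot GE GZ)) \<and>
          (\<not> psat F \<longrightarrow> halts i (GDot (enc F) GE) (GDot GE GO)))}"

end

theory Submission
  imports Defs
begin

declare dot_def[simp]

section \<open>Semantic model\<close>

inductive Us :: "gt \<Rightarrow> gt \<Rightarrow> gt \<Rightarrow> gt \<Rightarrow> gt \<Rightarrow> gt \<Rightarrow> gt \<Rightarrow> bool" where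
  U3: "Us x s z GZ i i x"
| U4: "Us x v (GDot r z) p i i u \<Longrightarrow> Us (GDot x v) s z q (GDot q (GDot s (GDot p (GDot r (GDot GZ j))))) i u"
| U5: "Us (GDot x r) v z p i i u \<Longrightarrow> Us x s (GDot v z) q (GDot q (GDot s (GDot p (GDot r (GDot GO j))))) i u"
| U6: "Us x s z q j i u \<Longrightarrow> Us x s z q (GDot q' (GDot s' (GDot p (GDot r (GDot d j))))) i u"

fun aps :: "sym \<Rightarrow> gt list \<Rightarrow> gt" where
  "aps SEmp _ = GE" | "aps SZero _ = GZ" | "aps SOne _ = GO"
| "aps SDot [a, b] = GDot a b" | "aps SDot _ = GE"

fun pr :: "prd \<Rightarrow> gt list \<Rightarrow> bool" where
  "pr PT [i, a, u] = Us GE GE (GDot a GE) GO i i u"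
| "pr PU [x, s, z, q, j, i, u] = Us x s z q j i u"
| "pr _ _ = False"

primrec ev :: "(nat \<Rightarrow> gt) \<Rightarrow> tm \<Rightarrow> gt" where
  "ev e (Var n) = e n"
| "ev e (App f ts) = aps f (map (ev e) ts)"

definition shift :: "(nat \<Rightarrow> gt) \<Rightarrow> nat \<Rightarrow> gt \<Rightarrow> nat \<Rightarrow> gt" where
  "shift e k x = (\<lambda>n. if n < k then e n else if n = k then x else e (n - 1))"

primrec sem :: "(nat \<Rightarrow> gt) \<Rightarrow> fm \<Rightarrow> bool" where
  "sem e FF = False"
| "sem e (Pred p ts) = pr p (map (ev e) ts)"
| "sem e (Eq t u) = (ev e t = ev e u)"
| "sem e (Imp p q) = (sem e p \<longrightarrow> sem e q)"
| "sem e (And p q) = (sem e p \<and> sem e q)"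
| "sem e (Or p q) = (sem e p \<or> sem e q)"
| "sem e (All p) = (\<forall>x. sem (shift e 0 x) p)"
| "sem e (Ex p) = (\<exists>x. sem (shift e 0 x) p)"

lemma ev_lift: "ev (shift e k x) (liftt k t) = ev e t"
  by (induction t) (auto simp: shift_def comp_def intro!: arg_cong[where f="aps _"])

lemma ev_subst: "ev e (substt t s k) = ev (shift e k (ev e s)) t"
  by (induction t) (auto simp: shift_def comp_def intro!: arg_cong[where f="aps _"])

lemma shift_comm: "shift (shift e k x) 0 y = shift (shift e 0 y) (Suc k) x"
  by (rule ext) (auto simp: shift_def)

lemma sem_lift: "sem (shift e k x) (liftf k p) = sem e p"
  by (induction p arbitrary: e k) (auto simp: ev_lift comp_def shift_comm)

lemma sem_subst: "sem e (substf p s k) = sem (shift e k (ev e s)) p"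
  by (induction p arbitrary: e k s) (auto simp: ev_subst comp_def shift_comm ev_lift)

lemma soundness: "G \<turnstile> p \<Longrightarrow> (\<forall>g\<in>set G. sem e g) \<Longrightarrow> sem e p"
proof (induction arbitrary: e rule: deriv.induct)
  case (AllI G p)
  show ?case using AllI by (auto simp: sem_lift)
next
  case (ExE G p q)
  then obtain x where x: "sem (shift e 0 x) p" using ExE.IH(1) by (meson sem.simps(8))
  have "sem (shift e 0 x) (liftf 0 q)" using ExE.IH(2)[of "shift e 0 x"] ExE.prems x by (simp add: sem_lift)
  then show ?case by (simp add: sem_lift)
next
  case (EqS G s t p)
  then show ?case by (auto simp: sem_subst)
qed (auto simp: sem_subst)

lemma sem_allc: "(\<And>e'. sem e' p) \<Longrightarrow> sem e (allc n p)"
  by (induction n arbitrary: e) auto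

lemma sem_axB: "sem e axB"
  unfolding axB_def ax1_def ax2_def ax3_def ax4_def ax5_def ax6_def
  apply (simp only: sem.simps)
  apply (intro conjI sem_allc)
       apply (simp_all add: fT_def fU_def)
    apply (rule U3)
   apply (rule impI, erule U4)
  apply (rule impI, erule U5)
  apply (rule impI, erule U6)
  done

lemma ev_tm_of[simp]: "ev e (tm_of g) = g"
  by (induction g) auto

inductive rch :: "gt \<Rightarrow> gt \<Rightarrow> bool" where
  "rch j j"
| "rch j k \<Longrightarrow> rch j (GDot q (GDot s (GDot p (GDot r (GDot d k)))))"

lemma rch_cons: "rch k i \<Longrightarrow> k = GDot q (GDot s (GDot p (GDot r (GDot d j)))) \<Longrightarrow> rch j i"
  by (induction rule: rch.induct) (auto intro: rch.intros)

lemma rch_quints: "rch j i \<Longrightarrow> set (quints j) \<subseteq> set (quints i)"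
  by (induction rule: rch.induct) auto

lemma quints_rch: "(q, s, p, r, d) \<in> set (quints i) \<Longrightarrow>
   \<exists>j. rch (GDot q (GDot s (GDot p (GDot r (GDot d j))))) i"
  by (induction i rule: quints.induct) (auto intro: rch.intros)

lemma Us_halts: "Us x s z q j i u \<Longrightarrow> rch j i \<Longrightarrow>
   \<exists>s' z'. (step i)\<^sup>*\<^sup>* (x, s, z, q) (u, s', z', GZ)"
proof (induction rule: Us.induct)
  case (U3 x s z i)
  then show ?case by auto
next
  case (U4 x v r z p i u s q j)
  then have "(q, s, p, r, GZ) \<in> set (quints i)"
    using rch_quints by fastforce
  then have "step i (GDot x v, s, z, q) (x, v, GDot r z, p)" by (rule step.left)
  moreover obtain s' z' where "(step i)\<^sup>*\<^sup>* (x, v, GDot r z, p) (u, s', z', GZ)"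
    using U4 rch.intros(1) by blast
  ultimately show ?case by (meson converse_rtranclp_into_rtranclp)
next
  case (U5 x r v z p i u s q j)
  then have "(q, s, p, r, GO) \<in> set (quints i)"
    using rch_quints by fastforce
  then have "step i (x, s, GDot v z, q) (GDot x r, v, z, p)" by (rule step.right)
  moreover obtain s' z' where "(step i)\<^sup>*\<^sup>* (GDot x r, v, z, p) (u, s', z', GZ)"
    using U5 rch.intros(1) by blast
  ultimately show ?case by (meson converse_rtranclp_into_rtranclp)
next
  case (U6 x s z q j i u q' s' p r d)
  then show ?case using rch_cons by blast
qed

section \<open>Completeness\<close>

fun substs :: "fm \<Rightarrow> tm list \<Rightarrow> fm" where
  "substs p [] = p"
| "substs p (t # ts) = substs (substf p t (length ts)) ts"

lemma liftt_tm_of[simp]: "liftt k (tm_of g) = tm_of g"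
  by (induction g) auto

lemma substt_tm_of[simp]: "substt (tm_of g) s k = tm_of g"
  by (induction g) auto

lemma substf_allc: "substf (allc n p) (tm_of g) k = allc n (substf p (tm_of g) (k + n))"
  by (induction n arbitrary: k) auto

lemma allc_inst: "G \<turnstile> allc (length gs) p \<Longrightarrow> G \<turnstile> substs p (map tm_of gs)"
proof (induction gs arbitrary: p)
  case Nil then show ?case by simp
next
  case (Cons g gs)
  then have "G \<turnstile> All (allc (length gs) p)" by simp
  then have "G \<turnstile> substf (allc (length gs) p) (tm_of g) 0" by (rule AllE)
  then have "G \<turnstile> allc (length gs) (substf p (tm_of g) (length gs))" by (simp add: substf_allc)
  then show ?case using Cons.IH by simp
qed

lemma allc_inst': "length gs = n \<Longrightarrow> G \<turnstile> allc n p \<Longrightarrow> G \<turnstile> substs p (map tm_of gs)"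
  using allc_inst by blast

lemma axB_parts: "[axB] \<turnstile> ax1" "[axB] \<turnstile> ax2" "[axB] \<turnstile> ax3" "[axB] \<turnstile> ax4"
  "[axB] \<turnstile> ax5" "[axB] \<turnstile> ax6"
proof -
  have B: "[axB] \<turnstile> axB" by (rule Assum) simp
  show "[axB] \<turnstile> ax1" using B unfolding axB_def by (rule AndE1)
  show "[axB] \<turnstile> ax2" using B unfolding axB_def by (meson AndE1 AndE2)
  show "[axB] \<turnstile> ax3" using B unfolding axB_def by (meson AndE1 AndE2)
  show "[axB] \<turnstile> ax4" using B unfolding axB_def by (meson AndE1 AndE2)
  show "[axB] \<turnstile> ax5" using B unfolding axB_def by (meson AndE1 AndE2)
  show "[axB] \<turnstile> ax6" using B unfolding axB_def by (meson AndE1 AndE2)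
qed

abbreviation "dU x s z q j i u \<equiv> fU (tm_of x) (tm_of s) (tm_of z) (tm_of q) (tm_of j) (tm_of i) (tm_of u)"

lemma d1: "[axB] \<turnstile> dU GE GE (GDot a GE) GO i i u \<Longrightarrow> [axB] \<turnstile> fT (tm_of i) (tm_of a) (tm_of u)"
proof -
  assume h: "[axB] \<turnstile> dU GE GE (GDot a GE) GO i i u"
  have "[axB] \<turnstile> substs (Imp (fU tE tE (Var 1 \<cdot> tE) t1 (Var 0) (Var 0) (Var 2))
                      (fT (Var 0) (Var 1) (Var 2))) (map tm_of [u, a, i])"
    by (rule allc_inst'[OF _ axB_parts(2)[unfolded ax2_def]]) simp
  then have "[axB] \<turnstile> Imp (dU GE GE (GDot a GE) GO i i u) (fT (tm_of i) (tm_of a) (tm_of u))"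
    by (simp add: fT_def fU_def)
  then show ?thesis using h by (rule ImpE)
qed

lemma d3: "[axB] \<turnstile> dU x s z GZ i i x"
proof -
  have "[axB] \<turnstile> substs (fU (Var 0) (Var 1) (Var 2) t0 (Var 3) (Var 3) (Var 0)) (map tm_of [i, z, s, x])"
    by (rule allc_inst'[OF _ axB_parts(3)[unfolded ax3_def]]) simp
  then show ?thesis by (simp add: fU_def)
qed

lemma d4: "[axB] \<turnstile> dU x v (GDot r z) p i i u \<Longrightarrow>
  [axB] \<turnstile> dU (GDot x v) s z q (GDot q (GDot s (GDot p (GDot r (GDot GZ j))))) i u"
proof -
  assume h: "[axB] \<turnstile> dU x v (GDot r z) p i i u"
  have "[axB] \<turnstile> substs (Imp (fU (Var 0) (Var 1) (Var 2 \<cdot> Var 3) (Var 4) (Var 5) (Var 5) (Var 6))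
     (fU (Var 0 \<cdot> Var 1) (Var 7) (Var 3) (Var 8)
         (Var 8 \<cdot> Var 7 \<cdot> Var 4 \<cdot> Var 2 \<cdot> t0 \<cdot> Var 9) (Var 5) (Var 6))) (map tm_of [j,q,s,u,i,p,z,r,v,x])"
    by (rule allc_inst'[OF _ axB_parts(4)[unfolded ax4_def]]) simp
  then have "[axB] \<turnstile> Imp (dU x v (GDot r z) p i i u)
     (dU (GDot x v) s z q (GDot q (GDot s (GDot p (GDot r (GDot GZ j))))) i u)"
    by (simp add: fU_def)
  then show ?thesis using h by (rule ImpE)
qed

lemma d5: "[axB] \<turnstile> dU (GDot x r) v z p i i u \<Longrightarrow>
  [axB] \<turnstile> dU x s (GDot v z) q (GDot q (GDot s (GDot p (GDot r (GDot GO j))))) i u"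
proof -
  assume h: "[axB] \<turnstile> dU (GDot x r) v z p i i u"
  have "[axB] \<turnstile> substs (Imp (fU (Var 0 \<cdot> Var 1) (Var 2) (Var 3) (Var 4) (Var 5) (Var 5) (Var 6))
     (fU (Var 0) (Var 7) (Var 2 \<cdot> Var 3) (Var 8)
         (Var 8 \<cdot> Var 7 \<cdot> Var 4 \<cdot> Var 1 \<cdot> t1 \<cdot> Var 9) (Var 5) (Var 6))) (map tm_of [j,q,s,u,i,p,z,v,r,x])"
    by (rule allc_inst'[OF _ axB_parts(5)[unfolded ax5_def]]) simp
  then have "[axB] \<turnstile> Imp (dU (GDot x r) v z p i i u)
     (dU x s (GDot v z) q (GDot q (GDot s (GDot p (GDot r (GDot GO j))))) i u)"
    by (simp add: fU_def)
  then show ?thesis using h by (rule ImpE)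
qed

lemma d6: "[axB] \<turnstile> dU x s z q j i u \<Longrightarrow>
  [axB] \<turnstile> dU x s z q (GDot q' (GDot s' (GDot p (GDot r (GDot d j))))) i u"
proof -
  assume h: "[axB] \<turnstile> dU x s z q j i u"
  have "[axB] \<turnstile> substs (Imp (fU (Var 0) (Var 1) (Var 2) (Var 3) (Var 4) (Var 5) (Var 6))
     (fU (Var 0) (Var 1) (Var 2) (Var 3)
         (Var 7 \<cdot> Var 8 \<cdot> Var 9 \<cdot> Var 10 \<cdot> Var 11 \<cdot> Var 4) (Var 5) (Var 6))) (map tm_of [d,r,p,s',q',u,i,j,q,z,s,x])"
    by (rule allc_inst'[OF _ axB_parts(6)[unfolded ax6_def]]) simp
  then have "[axB] \<turnstile> Imp (dU x s z q j i u)
     (dU x s z q (GDot q' (GDot s' (GDot p (GDot r (GDot d j))))) i u)"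
    by (simp add: fU_def)
  then show ?thesis using h by (rule ImpE)
qed

lemma d_rch: "rch j k \<Longrightarrow> [axB] \<turnstile> dU x s z q j i u \<Longrightarrow> [axB] \<turnstile> dU x s z q k i u"
proof (induction rule: rch.induct)
  case (1 j) then show ?case .
next
  case (2 j k q s p r d) then show ?case using d6 by blast
qed

lemma complete_run: "(step i)\<^sup>*\<^sup>* c c' \<Longrightarrow> c' = (u, s', z', GZ) \<Longrightarrow>
   [axB] \<turnstile> dU (fst c) (fst (snd c)) (fst (snd (snd c))) (snd (snd (snd c))) i i u"
proof (induction rule: converse_rtranclp_induct)
  case base
  then show ?case using d3 by simp
next
  case (step c c1)
  from step.hyps(1) step.IH[OF step.prems] show ?case
  proof (cases rule: step.cases)
    case (left q s p r x v z)
    obtain j where R: "rch (GDot q (GDot s (GDot p (GDot r (GDot GZ j))))) i"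
      using quints_rch[OF left(3)] by blast
    have "[axB] \<turnstile> dU x v (GDot r z) p i i u" using left step.IH[OF step.prems] by simp
    then have "[axB] \<turnstile> dU (GDot x v) s z q (GDot q (GDot s (GDot p (GDot r (GDot GZ j))))) i u"
      by (rule d4)
    then have "[axB] \<turnstile> dU (GDot x v) s z q i i u" by (rule d_rch[OF R])
    then show ?thesis using left(1) by simp
  next
    case (right q s p r x v z)
    obtain j where R: "rch (GDot q (GDot s (GDot p (GDot r (GDot GO j))))) i"
      using quints_rch[OF right(3)] by blast
    have "[axB] \<turnstile> dU (GDot x r) v z p i i u" using right step.IH[OF step.prems] by simp
    then have "[axB] \<turnstile> dU x s (GDot v z) q (GDot q (GDot s (GDot p (GDot r (GDot GO j))))) i u"
      by (rule d5)
    then have "[axB] \<turnstile> dU x s (GDot v z) q i i u" by (rule d_rch[OF R])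
    then show ?thesis using right(1) by simp
  qed
qed

theorem corollary3:
  fixes enc :: "pform \<Rightarrow> gt" and i a :: gt
  assumes "i \<in> UU enc" and "a \<in> L"
  shows "(\<exists>u. halts i a u) \<longleftrightarrow> [axB] \<turnstile> Ex (fT (tm_of i) (tm_of a) (Var 0))"
proof
  assume "\<exists>u. halts i a u"
  then obtain u s z where r: "(step i)\<^sup>*\<^sup>* (GE, GE, GDot a GE, GO) (u, s, z, GZ)"
    unfolding halts_def by blast
  have "[axB] \<turnstile> dU GE GE (GDot a GE) GO i i u"
    using complete_run[OF r refl] by simp
  then have "[axB] \<turnstile> fT (tm_of i) (tm_of a) (tm_of u)" by (rule d1)
  then have "[axB] \<turnstile> substf (fT (tm_of i) (tm_of a) (Var 0)) (tm_of u) 0"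
    by (simp add: fT_def)
  then show "[axB] \<turnstile> Ex (fT (tm_of i) (tm_of a) (Var 0))" by (rule ExI)
next
  assume "[axB] \<turnstile> Ex (fT (tm_of i) (tm_of a) (Var 0))"
  then have "sem (\<lambda>_. GE) (Ex (fT (tm_of i) (tm_of a) (Var 0)))"
    by (rule soundness) (simp add: sem_axB)
  then obtain u where "Us GE GE (GDot a GE) GO i i u"
    by (auto simp: fT_def shift_def)
  then show "\<exists>u. halts i a u"
    unfolding halts_def using Us_halts rch.intros(1) by blast
qed

end
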